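(* A coproduct in a $*$-category is orthogonal if and only if it can be extended to an orthogonal biproduct; that is, a coproduct $(X,s_1,\dots,s_n)$ of $X_1,\dots,X_n$ is orthogonal if and only if there exist morphisms $r_k\colon X\to X_k$ ($k=1,\dots,n$) such that $(X,s_1,r_1,\dots,s_n,r_n)$ is an orthogonal biproduct.
   Context: A $*$-category is a category with a choice of $f^*\colon Y\to X$ for each $f\colon X\to Y$ such that $1^*=1$, $(gf)^*=f^*g^*$, $(f^* )^*=f$; an endomorphism $e$ is Hermitian if $e^*=e$. A coproduct $(X,s_1,\dots,s_n)$ is orthogonal if $s_k^*s_j=0$ for all $j\neq k$. A biproduct $(X,s_1,r_1,\dots,s_n,r_n)$ (in a category with a zero object: $(X,s_1,\dots,s_n)$ a coproduct, $(X,r_1,\dots,r_n)$ a product, $r_ks_k=1$, $r_ks_j=0$ for $j\neq k$) is orthogonal if each idempotent $s_kr_k$ is Hermitian. *)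

theory Defs
  imports Main
begin

text \<open>A (small) category given by objects, arrows, domain, codomain, identities and
  composition; Comp g f is "g after f".\<close>

record ('o, 'm) cat =
  Obj :: "'o set"
  Arr :: "'m set"
  Dom :: "'m \<Rightarrow> 'o"
  Cod :: "'m \<Rightarrow> 'o"
  Id :: "'o \<Rightarrow> 'm"
  Comp :: "'m \<Rightarrow> 'm \<Rightarrow> 'm"

definition hom :: "('o, 'm) cat \<Rightarrow> 'o \<Rightarrow> 'o \<Rightarrow> 'm set" where
  "hom C X Y = {f \<in> Arr C. Dom C f = X \<and> Cod C f = Y}"

definition category :: "('o, 'm) cat \<Rightarrow> bool" where
  "category C \<longleftrightarrow>
     (\<forall>f \<in> Arr C. Dom C f \<in> Obj C \<and> Cod C f \<in> Obj C) \<and>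
     (\<forall>X \<in> Obj C. Id C X \<in> hom C X X) \<and>
     (\<forall>f \<in> Arr C. \<forall>g \<in> Arr C. Cod C f = Dom C g \<longrightarrow>
        Comp C g f \<in> hom C (Dom C f) (Cod C g)) \<and>
     (\<forall>f \<in> Arr C. Comp C f (Id C (Dom C f)) = f \<and> Comp C (Id C (Cod C f)) f = f) \<and>
     (\<forall>f \<in> Arr C. \<forall>g \<in> Arr C. \<forall>h \<in> Arr C.
        Cod C f = Dom C g \<and> Cod C g = Dom C h \<longrightarrow>
        Comp C h (Comp C g f) = Comp C (Comp C h g) f)"

definition star_category :: "('o, 'm) cat \<Rightarrow> ('m \<Rightarrow> 'm) \<Rightarrow> bool" where
  "star_category C st \<longleftrightarrow> category C \<and>
     (\<forall>f \<in> Arr C. st f \<in> hom C (Cod C f) (Dom C f)) \<and>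
     (\<forall>X \<in> Obj C. st (Id C X) = Id C X) \<and>
     (\<forall>f \<in> Arr C. \<forall>g \<in> Arr C. Cod C f = Dom C g \<longrightarrow>
        st (Comp C g f) = Comp C (st f) (st g)) \<and>
     (\<forall>f \<in> Arr C. st (st f) = f)"

definition zero_object :: "('o, 'm) cat \<Rightarrow> 'o \<Rightarrow> bool" where
  "zero_object C Z \<longleftrightarrow> Z \<in> Obj C \<and>
     (\<forall>Y \<in> Obj C. (\<exists>!f. f \<in> hom C Z Y) \<and> (\<exists>!f. f \<in> hom C Y Z))"

definition has_zero_object :: "('o, 'm) cat \<Rightarrow> bool" where
  "has_zero_object C \<longleftrightarrow> (\<exists>Z. zero_object C Z)"

definition zero_mor :: "('o, 'm) cat \<Rightarrow> 'm \<Rightarrow> bool" where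
  "zero_mor C f \<longleftrightarrow> f \<in> Arr C \<and>
     (\<exists>Z g h. zero_object C Z \<and> g \<in> hom C (Dom C f) Z \<and> h \<in> hom C Z (Cod C f) \<and>
        f = Comp C h g)"

definition is_coproduct ::
  "('o, 'm) cat \<Rightarrow> nat \<Rightarrow> (nat \<Rightarrow> 'o) \<Rightarrow> 'o \<Rightarrow> (nat \<Rightarrow> 'm) \<Rightarrow> bool" where
  "is_coproduct C n Xs X s \<longleftrightarrow> X \<in> Obj C \<and> (\<forall>k \<in> {1..n}. Xs k \<in> Obj C) \<and>
     (\<forall>k \<in> {1..n}. s k \<in> hom C (Xs k) X) \<and>
     (\<forall>Y \<in> Obj C. \<forall>f. (\<forall>k \<in> {1..n}. f k \<in> hom C (Xs k) Y) \<longrightarrow>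
        (\<exists>!u. u \<in> hom C X Y \<and> (\<forall>k \<in> {1..n}. Comp C u (s k) = f k)))"

definition is_product ::
  "('o, 'm) cat \<Rightarrow> nat \<Rightarrow> (nat \<Rightarrow> 'o) \<Rightarrow> 'o \<Rightarrow> (nat \<Rightarrow> 'm) \<Rightarrow> bool" where
  "is_product C n Xs X r \<longleftrightarrow> X \<in> Obj C \<and> (\<forall>k \<in> {1..n}. Xs k \<in> Obj C) \<and>
     (\<forall>k \<in> {1..n}. r k \<in> hom C X (Xs k)) \<and>
     (\<forall>Y \<in> Obj C. \<forall>f. (\<forall>k \<in> {1..n}. f k \<in> hom C Y (Xs k)) \<longrightarrow>
        (\<exists>!u. u \<in> hom C Y X \<and> (\<forall>k \<in> {1..n}. Comp C (r k) u = f k)))"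

definition orthogonal_coproduct ::
  "('o, 'm) cat \<Rightarrow> ('m \<Rightarrow> 'm) \<Rightarrow> nat \<Rightarrow> (nat \<Rightarrow> 'o) \<Rightarrow> 'o \<Rightarrow> (nat \<Rightarrow> 'm) \<Rightarrow> bool" where
  "orthogonal_coproduct C st n Xs X s \<longleftrightarrow> is_coproduct C n Xs X s \<and>
     (\<forall>j \<in> {1..n}. \<forall>k \<in> {1..n}. j \<noteq> k \<longrightarrow> zero_mor C (Comp C (st (s k)) (s j)))"

definition is_biproduct ::
  "('o, 'm) cat \<Rightarrow> nat \<Rightarrow> (nat \<Rightarrow> 'o) \<Rightarrow> 'o \<Rightarrow> (nat \<Rightarrow> 'm) \<Rightarrow> (nat \<Rightarrow> 'm) \<Rightarrow> bool" where
  "is_biproduct C n Xs X s r \<longleftrightarrow> is_coproduct C n Xs X s \<and> is_product C n Xs X r \<and>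
     (\<forall>k \<in> {1..n}. Comp C (r k) (s k) = Id C (Xs k)) \<and>
     (\<forall>j \<in> {1..n}. \<forall>k \<in> {1..n}. j \<noteq> k \<longrightarrow> zero_mor C (Comp C (r k) (s j)))"

definition orthogonal_biproduct ::
  "('o, 'm) cat \<Rightarrow> ('m \<Rightarrow> 'm) \<Rightarrow> nat \<Rightarrow> (nat \<Rightarrow> 'o) \<Rightarrow> 'o \<Rightarrow> (nat \<Rightarrow> 'm) \<Rightarrow> (nat \<Rightarrow> 'm) \<Rightarrow> bool" where
  "orthogonal_biproduct C st n Xs X s r \<longleftrightarrow> is_biproduct C n Xs X s r \<and>
     (\<forall>k \<in> {1..n}. st (Comp C (s k) (r k)) = Comp C (s k) (r k))"

end

theory Submission
  imports Defs
begin

locale sc =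
  fixes C :: "('o, 'm) cat" and st :: "'m \<Rightarrow> 'm"
  assumes SC: "star_category C st"
begin

abbreviation cp (infixr "\<cdot>" 70) where "g \<cdot> f \<equiv> Comp C g f"

lemma cat: "category C" using SC unfolding star_category_def by blast

lemma hom_obj: "f \<in> hom C A B \<Longrightarrow> A \<in> Obj C \<and> B \<in> Obj C"
  using cat unfolding category_def hom_def by auto

lemma comp_hom[intro]: "f \<in> hom C A B \<Longrightarrow> g \<in> hom C B D \<Longrightarrow> g \<cdot> f \<in> hom C A D"
  using cat unfolding category_def hom_def by auto

lemma assoc: "f \<in> hom C A B \<Longrightarrow> g \<in> hom C B D \<Longrightarrow> h \<in> hom C D E \<Longrightarrow>
   h \<cdot> (g \<cdot> f) = (h \<cdot> g) \<cdot> f"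
  using cat unfolding category_def hom_def by auto

lemma idl: "f \<in> hom C A B \<Longrightarrow> Id C B \<cdot> f = f"
  using cat unfolding category_def hom_def by auto

lemma idr: "f \<in> hom C A B \<Longrightarrow> f \<cdot> Id C A = f"
  using cat unfolding category_def hom_def by auto

lemma id_hom[intro]: "A \<in> Obj C \<Longrightarrow> Id C A \<in> hom C A A"
  using cat unfolding category_def hom_def by auto

lemma st_hom[intro]: "f \<in> hom C A B \<Longrightarrow> st f \<in> hom C B A"
  using SC unfolding star_category_def hom_def by auto

lemma st_comp: "f \<in> hom C A B \<Longrightarrow> g \<in> hom C B D \<Longrightarrow> st (g \<cdot> f) = st f \<cdot> st g"
  using SC unfolding star_category_def hom_def by auto

lemma st_st: "f \<in> hom C A B \<Longrightarrow> st (st f) = f"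
  using SC unfolding star_category_def hom_def by auto

lemma st_id: "A \<in> Obj C \<Longrightarrow> st (Id C A) = Id C A"
  using SC unfolding star_category_def hom_def by auto

lemma zero_morI:
  assumes "zero_object C Z" "g \<in> hom C A Z" "h \<in> hom C Z B"
  shows "zero_mor C (h \<cdot> g)"
proof -
  have hg: "h \<cdot> g \<in> hom C A B" using assms by blast
  then have "Dom C (h \<cdot> g) = A" "Cod C (h \<cdot> g) = B" "h \<cdot> g \<in> Arr C" unfolding hom_def by auto
  then show ?thesis unfolding zero_mor_def using assms by metis
qed

lemma zero_morE:
  assumes "zero_mor C f" "f \<in> hom C A B"
  obtains Z g h where "zero_object C Z" "g \<in> hom C A Z" "h \<in> hom C Z B" "f = h \<cdot> g"
proof -
  have "Dom C f = A" "Cod C f = B" using assms(2) unfolding hom_def by auto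
  then show ?thesis using assms(1) that unfolding zero_mor_def by metis
qed

lemma zero_post:
  assumes "zero_mor C f" "f \<in> hom C A B" "g \<in> hom C B D"
  shows "zero_mor C (g \<cdot> f)"
proof -
  obtain Z g0 h where Zg: "zero_object C Z" "g0 \<in> hom C A Z" "h \<in> hom C Z B" "f = h \<cdot> g0"
    using assms zero_morE by metis
  have e: "g \<cdot> f = (g \<cdot> h) \<cdot> g0" using Zg assms assoc by metis
  have "g \<cdot> h \<in> hom C Z D" using Zg assms by blast
  then show ?thesis using e zero_morI Zg by metis
qed

lemma zero_pre:
  assumes "zero_mor C f" "f \<in> hom C A B" "g \<in> hom C D A"
  shows "zero_mor C (f \<cdot> g)"
proof -
  obtain Z g0 h where Zg: "zero_object C Z" "g0 \<in> hom C A Z" "h \<in> hom C Z B" "f = h \<cdot> g0"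
    using assms zero_morE by metis
  have e: "f \<cdot> g = h \<cdot> (g0 \<cdot> g)" using Zg assms assoc by metis
  have "g0 \<cdot> g \<in> hom C D Z" using Zg assms by blast
  then show ?thesis using e zero_morI Zg by metis
qed

lemma zero_st:
  assumes "zero_mor C f" "f \<in> hom C A B"
  shows "zero_mor C (st f)"
proof -
  obtain Z g0 h where Zg: "zero_object C Z" "g0 \<in> hom C A Z" "h \<in> hom C Z B" "f = h \<cdot> g0"
    using assms zero_morE by metis
  have e: "st f = st g0 \<cdot> st h" using Zg st_comp by metis
  have "st h \<in> hom C B Z" "st g0 \<in> hom C Z A" using Zg by blast+
  then show ?thesis using e zero_morI Zg by metis
qed

lemma zero_exists:
  assumes "has_zero_object C" "A \<in> Obj C" "B \<in> Obj C"
  shows "\<exists>f. f \<in> hom C A B \<and> zero_mor C f"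
proof -
  obtain Z where Z: "zero_object C Z" using assms unfolding has_zero_object_def by blast
  obtain g where g: "g \<in> hom C A Z" using Z assms unfolding zero_object_def by blast
  obtain h where h: "h \<in> hom C Z B" using Z assms unfolding zero_object_def by blast
  have "h \<cdot> g \<in> hom C A B" using g h by blast
  then show ?thesis using zero_morI Z g h by metis
qed

lemma zero_uniq_from: "zero_object C Z \<Longrightarrow> Y \<in> Obj C \<Longrightarrow> f \<in> hom C Z Y \<Longrightarrow> f' \<in> hom C Z Y \<Longrightarrow> f = f'"
  unfolding zero_object_def by blast

lemma zero_uniq_to: "zero_object C Z \<Longrightarrow> Y \<in> Obj C \<Longrightarrow> f \<in> hom C Y Z \<Longrightarrow> f' \<in> hom C Y Z \<Longrightarrow> f = f'"
  unfolding zero_object_def by blast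

lemma zero_unique:
  assumes "zero_mor C f" "zero_mor C f'" "f \<in> hom C A B" "f' \<in> hom C A B"
  shows "f = f'"
proof -
  obtain Z g h where Zg: "zero_object C Z" "g \<in> hom C A Z" "h \<in> hom C Z B" "f = h \<cdot> g"
    using assms zero_morE by metis
  obtain Z' g' h' where Zg': "zero_object C Z'" "g' \<in> hom C A Z'" "h' \<in> hom C Z' B" "f' = h' \<cdot> g'"
    using assms zero_morE by metis
  have "Z' \<in> Obj C" using Zg' unfolding zero_object_def by blast
  then obtain i where i: "i \<in> hom C Z Z'" using Zg unfolding zero_object_def by blast
  have "i \<cdot> g \<in> hom C A Z'" using i Zg by blast
  then have 1: "i \<cdot> g = g'" using zero_uniq_to[OF Zg'(1) conjunct1[OF hom_obj[OF Zg(2)]]] Zg' by blast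
  have "h' \<cdot> i \<in> hom C Z B" using i Zg' by blast
  then have 2: "h' \<cdot> i = h" using zero_uniq_from[OF Zg(1) conjunct2[OF hom_obj[OF Zg(3)]]] Zg by blast
  have "f' = h' \<cdot> (i \<cdot> g)" using 1 Zg' by simp
  also have "\<dots> = (h' \<cdot> i) \<cdot> g" using assoc Zg Zg' i by metis
  finally show ?thesis using 2 Zg by simp
qed

lemma backward:
  assumes B: "orthogonal_biproduct C st n Xs X s r"
  shows "orthogonal_coproduct C st n Xs X s"
proof -
  have cop: "is_coproduct C n Xs X s" and prod: "is_product C n Xs X r"
    and rs: "\<forall>k \<in> {1..n}. r k \<cdot> s k = Id C (Xs k)"
    and rz: "\<forall>j \<in> {1..n}. \<forall>k \<in> {1..n}. j \<noteq> k \<longrightarrow> zero_mor C (r k \<cdot> s j)"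
    and he: "\<forall>k \<in> {1..n}. st (s k \<cdot> r k) = s k \<cdot> r k"
    using B unfolding orthogonal_biproduct_def is_biproduct_def by auto
  have sh: "\<And>k. k \<in> {1..n} \<Longrightarrow> s k \<in> hom C (Xs k) X" using cop unfolding is_coproduct_def by auto
  have rh: "\<And>k. k \<in> {1..n} \<Longrightarrow> r k \<in> hom C X (Xs k)" using prod unfolding is_product_def by auto
  have "zero_mor C (st (s k) \<cdot> s j)" if jk: "j \<in> {1..n}" "k \<in> {1..n}" "j \<noteq> k" for j k
  proof -
    have sk: "s k \<in> hom C (Xs k) X" and sj: "s j \<in> hom C (Xs j) X" and rk: "r k \<in> hom C X (Xs k)"
      using sh rh jk by auto
    have ssk: "st (s k) \<in> hom C X (Xs k)" using sk by blast
    have srh: "s k \<cdot> r k \<in> hom C X X" using sk rk by blast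
    have "(s k \<cdot> r k) \<cdot> s k = s k \<cdot> (r k \<cdot> s k)" using assoc sk rk by metis
    also have "\<dots> = s k" using rs jk idr sk by metis
    finally have e1: "(s k \<cdot> r k) \<cdot> s k = s k" .
    have "st (s k) = st ((s k \<cdot> r k) \<cdot> s k)" using e1 by simp
    also have "\<dots> = st (s k) \<cdot> st (s k \<cdot> r k)" using st_comp sk srh by metis
    also have "\<dots> = st (s k) \<cdot> (s k \<cdot> r k)" using he jk by simp
    also have "\<dots> = (st (s k) \<cdot> s k) \<cdot> r k" using assoc ssk sk rk by metis
    finally have e2: "st (s k) = (st (s k) \<cdot> s k) \<cdot> r k" .
    have a: "st (s k) \<cdot> s k \<in> hom C (Xs k) (Xs k)" using ssk sk by blast
    have "st (s k) \<cdot> s j = ((st (s k) \<cdot> s k) \<cdot> r k) \<cdot> s j" using e2 by simp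
    also have "\<dots> = (st (s k) \<cdot> s k) \<cdot> (r k \<cdot> s j)" using assoc a rk sj by metis
    finally have e3: "st (s k) \<cdot> s j = (st (s k) \<cdot> s k) \<cdot> (r k \<cdot> s j)" .
    have "r k \<cdot> s j \<in> hom C (Xs j) (Xs k)" using rk sj by blast
    then show ?thesis using e3 zero_post rz jk a by metis
  qed
  then show ?thesis unfolding orthogonal_coproduct_def using cop by blast
qed

lemma forward:
  assumes HZ: "has_zero_object C" and O: "orthogonal_coproduct C st n Xs X s"
  shows "\<exists>r. orthogonal_biproduct C st n Xs X s r"
proof -
  have cop: "is_coproduct C n Xs X s"
    and orth: "\<forall>j \<in> {1..n}. \<forall>k \<in> {1..n}. j \<noteq> k \<longrightarrow> zero_mor C (st (s k) \<cdot> s j)"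
    using O unfolding orthogonal_coproduct_def by auto
  have XO: "X \<in> Obj C" and XsO: "\<And>k. k \<in> {1..n} \<Longrightarrow> Xs k \<in> Obj C"
    and sh: "\<And>k. k \<in> {1..n} \<Longrightarrow> s k \<in> hom C (Xs k) X"
    and cop_ex: "\<And>Y f. Y \<in> Obj C \<Longrightarrow> (\<forall>k \<in> {1..n}. f k \<in> hom C (Xs k) Y) \<Longrightarrow>
        (\<exists>!u. u \<in> hom C X Y \<and> (\<forall>k \<in> {1..n}. u \<cdot> s k = f k))"
    using cop unfolding is_coproduct_def by auto
  have cop_uniq: "u = u'" if "u \<in> hom C X Y" "u' \<in> hom C X Y" "\<forall>j \<in> {1..n}. u \<cdot> s j = u' \<cdot> s j" for u u' Y
  proof -
    have "Y \<in> Obj C" using hom_obj[OF that(1)] by blast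
    moreover have "\<forall>k \<in> {1..n}. u \<cdot> s k \<in> hom C (Xs k) Y" using that(1) sh by blast
    ultimately have "\<exists>!w. w \<in> hom C X Y \<and> (\<forall>k \<in> {1..n}. w \<cdot> s k = u \<cdot> s k)"
      by (rule cop_ex)
    then show ?thesis using that unfolding Ex1_def by metis
  qed
  define z where "z A B = (SOME f. f \<in> hom C A B \<and> zero_mor C f)" for A B
  have zh: "z A B \<in> hom C A B \<and> zero_mor C (z A B)" if "A \<in> Obj C" "B \<in> Obj C" for A B
    unfolding z_def using someI_ex[OF zero_exists[OF HZ that]] .
  define d where "d k j = (if j = k then Id C (Xs k) else z (Xs j) (Xs k))" for k j
  have dh: "d k j \<in> hom C (Xs j) (Xs k)" if "k \<in> {1..n}" "j \<in> {1..n}" for k j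
    using zh XsO id_hom that unfolding d_def by auto
  have "\<forall>k\<in>{1..n}. \<exists>u. u \<in> hom C X (Xs k) \<and> (\<forall>j\<in>{1..n}. u \<cdot> s j = d k j)"
  proof
    fix k assume k: "k \<in> {1..n}"
    show "\<exists>u. u \<in> hom C X (Xs k) \<and> (\<forall>j\<in>{1..n}. u \<cdot> s j = d k j)"
      using cop_ex[OF XsO[OF k], of "d k"] dh k by blast
  qed
  from bchoice[OF this] obtain r where r: "\<forall>k\<in>{1..n}. r k \<in> hom C X (Xs k) \<and> (\<forall>j\<in>{1..n}. r k \<cdot> s j = d k j)"
    by blast
  have rh: "\<And>k. k \<in> {1..n} \<Longrightarrow> r k \<in> hom C X (Xs k)" using r by blast
  define a where "a k = st (s k) \<cdot> s k" for k
  define b where "b k = r k \<cdot> st (r k)" for k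
  have ah: "a k \<in> hom C (Xs k) (Xs k)" if "k \<in> {1..n}" for k
    using sh[OF that] unfolding a_def by blast
  have bh: "b k \<in> hom C (Xs k) (Xs k)" if "k \<in> {1..n}" for k
    using rh[OF that] unfolding b_def by blast
  have F1: "st (s k) = a k \<cdot> r k" if k: "k \<in> {1..n}" for k
  proof (rule cop_uniq)
    show "st (s k) \<in> hom C X (Xs k)" using sh k by blast
    show "a k \<cdot> r k \<in> hom C X (Xs k)" using ah rh k by blast
    show "\<forall>j\<in>{1..n}. st (s k) \<cdot> s j = (a k \<cdot> r k) \<cdot> s j"
    proof
      fix j assume j: "j \<in> {1..n}"
      have "(a k \<cdot> r k) \<cdot> s j = a k \<cdot> (r k \<cdot> s j)" using assoc[OF sh[OF j] rh[OF k] ah[OF k]] by simp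
      also have "\<dots> = a k \<cdot> d k j" using r j k by simp
      finally have e: "(a k \<cdot> r k) \<cdot> s j = a k \<cdot> d k j" .
      show "st (s k) \<cdot> s j = (a k \<cdot> r k) \<cdot> s j"
      proof (cases "j = k")
        case True
        then show ?thesis using e idr[OF ah[OF k]] unfolding d_def a_def by simp
      next
        case False
        have z1: "zero_mor C (st (s k) \<cdot> s j)" using orth j k False by blast
        have z2: "zero_mor C (a k \<cdot> d k j)"
          using zero_post[of "d k j" "Xs j" "Xs k" "a k" "Xs k"] zh XsO j k False ah
          unfolding d_def by auto
        have h1: "st (s k) \<cdot> s j \<in> hom C (Xs j) (Xs k)" using sh j k by blast
        have h2: "a k \<cdot> d k j \<in> hom C (Xs j) (Xs k)" using ah dh j k by blast
        show ?thesis using zero_unique[OF z1 z2 h1 h2] e by simp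
      qed
    qed
  qed
  have F2: "st (s k) \<cdot> st (r k) = Id C (Xs k)" if k: "k \<in> {1..n}" for k
  proof -
    have "r k \<cdot> s k = Id C (Xs k)" using r k unfolding d_def by simp
    then have "st (r k \<cdot> s k) = Id C (Xs k)" using st_id XsO k by simp
    then show ?thesis using st_comp[OF sh[OF k] rh[OF k]] by simp
  qed
  have F3: "a k \<cdot> b k = Id C (Xs k)" if k: "k \<in> {1..n}" for k
  proof -
    have "a k \<cdot> b k = (a k \<cdot> r k) \<cdot> st (r k)" unfolding b_def using assoc[OF st_hom[OF rh[OF k]] rh[OF k] ah[OF k]] by simp
    then show ?thesis using F1 F2 k by simp
  qed
  have sta: "st (a k) = a k" if k: "k \<in> {1..n}" for k
    unfolding a_def using st_comp[OF sh[OF k] st_hom[OF sh[OF k]]] st_st[OF sh[OF k]] by simp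
  have stb: "st (b k) = b k" if k: "k \<in> {1..n}" for k
    unfolding b_def using st_comp[OF st_hom[OF rh[OF k]] rh[OF k]] st_st[OF rh[OF k]] by simp
  have F4: "b k \<cdot> a k = Id C (Xs k)" if k: "k \<in> {1..n}" for k
  proof -
    have "st (a k \<cdot> b k) = st (b k) \<cdot> st (a k)" using st_comp[OF bh[OF k] ah[OF k]] by simp
    then show ?thesis using F3[OF k] sta[OF k] stb[OF k] st_id[OF XsO[OF k]] by simp
  qed
  have F5: "r k = b k \<cdot> st (s k)" if k: "k \<in> {1..n}" for k
  proof -
    have "b k \<cdot> st (s k) = b k \<cdot> (a k \<cdot> r k)" using F1 k by simp
    also have "\<dots> = (b k \<cdot> a k) \<cdot> r k" using assoc[OF rh[OF k] ah[OF k] bh[OF k]] by simp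
    also have "\<dots> = r k" using F4[OF k] idl[OF rh[OF k]] by simp
    finally show ?thesis by simp
  qed
  have F6: "st (s k \<cdot> r k) = s k \<cdot> r k" if k: "k \<in> {1..n}" for k
  proof -
    define q where "q = s k \<cdot> r k"
    have qh: "q \<in> hom C X X" unfolding q_def using sh rh k by blast
    have sq: "st q = st (r k) \<cdot> st (s k)" unfolding q_def using st_comp[OF rh[OF k] sh[OF k]] by simp
    have "q \<cdot> st q = (s k \<cdot> r k) \<cdot> (st (r k) \<cdot> st (s k))" using sq q_def by simp
    also have "\<dots> = s k \<cdot> (r k \<cdot> (st (r k) \<cdot> st (s k)))"
      using assoc[OF comp_hom[OF st_hom[OF sh[OF k]] st_hom[OF rh[OF k]]] rh[OF k] sh[OF k]] by simp
    also have "\<dots> = s k \<cdot> ((r k \<cdot> st (r k)) \<cdot> st (s k))"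
      using assoc[OF st_hom[OF sh[OF k]] st_hom[OF rh[OF k]] rh[OF k]] by simp
    also have "\<dots> = q" using F5 k unfolding q_def b_def by simp
    finally have e: "q \<cdot> st q = q" .
    have "st q = st (q \<cdot> st q)" using e by simp
    also have "\<dots> = st (st q) \<cdot> st q" using st_comp[OF st_hom[OF qh] qh] by simp
    also have "\<dots> = q" using st_st[OF qh] e by simp
    finally show ?thesis unfolding q_def .
  qed
  have prod: "is_product C n Xs X r"
    unfolding is_product_def
  proof (intro conjI ballI allI impI)
    show "X \<in> Obj C" by (rule XO)
    show "\<And>k. k \<in> {1..n} \<Longrightarrow> Xs k \<in> Obj C" by (rule XsO)
    show "\<And>k. k \<in> {1..n} \<Longrightarrow> r k \<in> hom C X (Xs k)" by (rule rh)
    fix Y f assume Y: "Y \<in> Obj C" and fh: "\<forall>k\<in>{1..n}. f k \<in> hom C Y (Xs k)"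
    define g where "g k = st (f k) \<cdot> a k" for k
    have gh: "\<forall>k\<in>{1..n}. g k \<in> hom C (Xs k) Y" unfolding g_def using fh ah by blast
    obtain v where v: "v \<in> hom C X Y" "\<forall>k\<in>{1..n}. v \<cdot> s k = g k"
      using cop_ex[OF Y gh] by blast
    have P1: "r k \<cdot> st v = f k" if k: "k \<in> {1..n}" for k
    proof -
      have fk: "f k \<in> hom C Y (Xs k)" using fh k by blast
      have "r k \<cdot> st v = (b k \<cdot> st (s k)) \<cdot> st v" using F5 k by simp
      also have "\<dots> = b k \<cdot> (st (s k) \<cdot> st v)" using assoc[OF st_hom[OF v(1)] st_hom[OF sh[OF k]] bh[OF k]] by simp
      also have "\<dots> = b k \<cdot> st (v \<cdot> s k)" using st_comp[OF sh[OF k] v(1)] by simp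
      also have "\<dots> = b k \<cdot> st (st (f k) \<cdot> a k)" using v k g_def by simp
      also have "\<dots> = b k \<cdot> (a k \<cdot> f k)" using st_comp[OF ah[OF k] st_hom[OF fk]] st_st[OF fk] sta[OF k] by simp
      also have "\<dots> = (b k \<cdot> a k) \<cdot> f k" using assoc[OF fk ah[OF k] bh[OF k]] by simp
      also have "\<dots> = f k" using F4[OF k] idl[OF fk] by simp
      finally show ?thesis .
    qed
    have P2: "u = st v" if u: "u \<in> hom C Y X" "\<forall>k\<in>{1..n}. r k \<cdot> u = f k" for u
    proof -
      have "st u = v"
      proof (rule cop_uniq)
        show "st u \<in> hom C X Y" using u by blast
        show "v \<in> hom C X Y" by (rule v)
        show "\<forall>j\<in>{1..n}. st u \<cdot> s j = v \<cdot> s j"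
        proof
          fix k assume k: "k \<in> {1..n}"
          have fk: "f k \<in> hom C Y (Xs k)" using fh k by blast
          have "st (s k) \<cdot> u = (a k \<cdot> r k) \<cdot> u" using F1 k by simp
          also have "\<dots> = a k \<cdot> (r k \<cdot> u)" using assoc[OF u(1) rh[OF k] ah[OF k]] by simp
          also have "\<dots> = a k \<cdot> f k" using u k by simp
          finally have e: "st (s k) \<cdot> u = a k \<cdot> f k" .
          have "st u \<cdot> s k = st (st (s k) \<cdot> u)" using st_comp[OF u(1) st_hom[OF sh[OF k]]] st_st[OF sh[OF k]] by simp
          also have "\<dots> = st (f k) \<cdot> a k" using e st_comp[OF fk ah[OF k]] sta[OF k] by simp
          also have "\<dots> = v \<cdot> s k" using v k g_def by simp
          finally show "st u \<cdot> s k = v \<cdot> s k" .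
        qed
      qed
      then show ?thesis using st_st[OF u(1)] by simp
    qed
    have "st v \<in> hom C Y X" using v by blast
    then show "\<exists>!u. u \<in> hom C Y X \<and> (\<forall>k\<in>{1..n}. r k \<cdot> u = f k)"
      using P1 P2 by blast
  qed
  have "orthogonal_biproduct C st n Xs X s r"
    unfolding orthogonal_biproduct_def is_biproduct_def
  proof (intro conjI ballI impI)
    show "is_coproduct C n Xs X s" by (rule cop)
    show "is_product C n Xs X r" by (rule prod)
    show "\<And>k. k \<in> {1..n} \<Longrightarrow> r k \<cdot> s k = Id C (Xs k)" using r unfolding d_def by simp
    show "\<And>j k. j \<in> {1..n} \<Longrightarrow> k \<in> {1..n} \<Longrightarrow> j \<noteq> k \<Longrightarrow> zero_mor C (r k \<cdot> s j)"
      using r zh XsO unfolding d_def by auto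
    show "\<And>k. k \<in> {1..n} \<Longrightarrow> st (s k \<cdot> r k) = s k \<cdot> r k" by (rule F6)
  qed
  then show ?thesis by blast
qed

end

theorem proposition4p2:
  fixes C :: "('o, 'm) cat" and st :: "'m \<Rightarrow> 'm"
    and n :: nat and Xs :: "nat \<Rightarrow> 'o" and X :: 'o and s :: "nat \<Rightarrow> 'm"
  assumes "star_category C st"
    and "has_zero_object C"
    and "is_coproduct C n Xs X s"
  shows "orthogonal_coproduct C st n Xs X s \<longleftrightarrow> (\<exists>r. orthogonal_biproduct C st n Xs X s r)"
proof -
  interpret sc C st by unfold_locales (rule assms(1))
  show ?thesis using forward[OF assms(2)] backward by blast
qed

end
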